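(* Let $G$ be a rooted graph, $(A,B)$ a separation of $G$, $\delta\in\mathbb N$, $H$ a graph in the $\delta$-folio of $G$, and $G_H$ a realization of $H$ in $G$ witnessed by $(\phi,\varphi)$. Let $Z=N_{G_H}[\phi(V(H))]$ and suppose $R(G)\cup Z\subseteq V(A)$. Let $S\subseteq V(B)\setminus V(A)$ be such that the $4\delta$-minor folio of $B\setminus S$ relative to $V(A)\cap V(B)$ is generic. Then $H$ belongs to the $\delta$-folio of $G\setminus S$.
   Context: A separation of $G$ is a pair $(A,B)$ of subgraphs with $G=A\cup B$, $E(A)\cap E(B)=\emptyset$. A rooted graph has roots $R(G)\subseteq V(G)$ with injective labels $\rho_G$. A rooted $H$ is a topological minor of rooted $G$ if there are injective $\phi:V(H)\to V(G)$ and $\varphi$ from $E(H)$ to paths of $G$ with endpoints $\phi(u),\phi(v)$ for $\{u,v\}$, pairwise internally vertex-disjoint, with no vertex of $\phi(V(H))$ internal to any path, and $\rho_G(\phi(v))=\rho_H(v)$ for $v\in R(H)$; the subgraph formed by $\phi(V(H))$ and these paths is a realization. The $\delta$-folio is the set of rooted topological minors $H$ with $|E(H)|+\mathrm{is}(H)\le\delta$ ($\mathrm{is}$ = number of isolated vertices). A rooted graph $H$ is a (rooted) minor of rooted $G$ if there is $\psi:V(H)\to2^{V(G)}$ with pairwise disjoint sets inducing connected subgraphs, an edge of $G$ between $\psi(h),\psi(h')$ for each $\{h,h'\}\in E(H)$, and for each $u\in R(H)$ the root of $G$ with label $\rho_H(u)$ lying in $\psi(u)$. $H$ has detail $\le\delta'$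 if $|E(H)|\le\delta'$ and $|V(H)\setminus R(H)|\le\delta'$. The $\delta'$-minor folio of a graph $B'$ relative to $Q\subseteq V(B')$ (i.e. with $Q$ as root set, labelled injectively) is generic if it contains every rooted graph with root set labelled by the labels of $Q$ and detail $\le\delta'$. *)

theory Defs
  imports Main
begin

record 'a graph =
  verts :: "'a set"
  edges :: "'a set set"

definition graph :: "'a graph \<Rightarrow> bool" where
  "graph G \<longleftrightarrow> finite (verts G) \<and> (\<forall>e\<in>edges G. e \<subseteq> verts G \<and> card e = 2)"

definition rooted :: "'a set \<Rightarrow> ('a \<Rightarrow> 'l) \<Rightarrow> 'a graph \<Rightarrow> bool" where
  "rooted R \<rho> G \<longleftrightarrow> graph G \<and> R \<subseteq> verts G \<and> inj_on \<rho> R"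

definition subgraph :: "'a graph \<Rightarrow> 'a graph \<Rightarrow> bool" where
  "subgraph H G \<longleftrightarrow> graph H \<and> verts H \<subseteq> verts G \<and> edges H \<subseteq> edges G"

definition separation :: "'a graph \<Rightarrow> 'a graph \<Rightarrow> 'a graph \<Rightarrow> bool" where
  "separation G A B \<longleftrightarrow> subgraph A G \<and> subgraph B G \<and>
     verts A \<union> verts B = verts G \<and> edges A \<union> edges B = edges G \<and> edges A \<inter> edges B = {}"

definition delete :: "'a graph \<Rightarrow> 'a set \<Rightarrow> 'a graph" where
  "delete G S = \<lparr>verts = verts G - S, edges = {e \<in> edges G. e \<inter> S = {}}\<rparr>"

definition isolated :: "'a graph \<Rightarrow> 'a set" where
  "isolated G = {v \<in> verts G. \<forall>e\<in>edges G. v \<notin> e}"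

definition closed_nbhd :: "'a graph \<Rightarrow> 'a set \<Rightarrow> 'a set" where
  "closed_nbhd G X = X \<union> {v \<in> verts G. \<exists>x\<in>X. {x, v} \<in> edges G}"

definition is_path :: "'a graph \<Rightarrow> 'a list \<Rightarrow> bool" where
  "is_path G P \<longleftrightarrow> P \<noteq> [] \<and> distinct P \<and> set P \<subseteq> verts G \<and>
     (\<forall>i. Suc i < length P \<longrightarrow> {P ! i, P ! Suc i} \<in> edges G)"

definition internal :: "'a list \<Rightarrow> 'a set" where
  "internal P = set P - {hd P, last P}"

definition path_edges :: "'a list \<Rightarrow> 'a set set" where
  "path_edges P = {{P ! i, P ! Suc i} | i. Suc i < length P}"

definition tm_model :: "'b graph \<Rightarrow> 'b set \<Rightarrow> ('b \<Rightarrow> 'l) \<Rightarrow> 'a graph \<Rightarrow> 'a set \<Rightarrow> ('a \<Rightarrow> 'l)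
    \<Rightarrow> ('b \<Rightarrow> 'a) \<Rightarrow> ('b set \<Rightarrow> 'a list) \<Rightarrow> bool" where
  "tm_model H RH \<rho>H G RG \<rho>G \<phi> \<Phi> \<longleftrightarrow>
     inj_on \<phi> (verts H) \<and> \<phi> ` verts H \<subseteq> verts G \<and>
     (\<forall>e\<in>edges H. is_path G (\<Phi> e) \<and>
        (\<exists>u v. e = {u, v} \<and> hd (\<Phi> e) = \<phi> u \<and> last (\<Phi> e) = \<phi> v)) \<and>
     (\<forall>e\<in>edges H. \<forall>e'\<in>edges H. e \<noteq> e' \<longrightarrow> internal (\<Phi> e) \<inter> internal (\<Phi> e') = {}) \<and>
     (\<forall>e\<in>edges H. internal (\<Phi> e) \<inter> \<phi> ` verts H = {}) \<and>
     (\<forall>v\<in>RH. \<phi> v \<in> RG \<and> \<rho>G (\<phi> v) = \<rho>H v)"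

definition top_minor :: "'b graph \<Rightarrow> 'b set \<Rightarrow> ('b \<Rightarrow> 'l) \<Rightarrow> 'a graph \<Rightarrow> 'a set \<Rightarrow> ('a \<Rightarrow> 'l) \<Rightarrow> bool" where
  "top_minor H RH \<rho>H G RG \<rho>G \<longleftrightarrow> rooted RH \<rho>H H \<and> (\<exists>\<phi> \<Phi>. tm_model H RH \<rho>H G RG \<rho>G \<phi> \<Phi>)"

definition in_folio :: "nat \<Rightarrow> 'b graph \<Rightarrow> 'b set \<Rightarrow> ('b \<Rightarrow> 'l) \<Rightarrow> 'a graph \<Rightarrow> 'a set \<Rightarrow> ('a \<Rightarrow> 'l) \<Rightarrow> bool" where
  "in_folio \<delta> H RH \<rho>H G RG \<rho>G \<longleftrightarrow>
     top_minor H RH \<rho>H G RG \<rho>G \<and> card (edges H) + card (isolated H) \<le> \<delta>"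

definition realization :: "'b graph \<Rightarrow> ('b \<Rightarrow> 'a) \<Rightarrow> ('b set \<Rightarrow> 'a list) \<Rightarrow> 'a graph" where
  "realization H \<phi> \<Phi> = \<lparr>verts = \<phi> ` verts H \<union> (\<Union>e\<in>edges H. set (\<Phi> e)),
                         edges = (\<Union>e\<in>edges H. path_edges (\<Phi> e))\<rparr>"

definition connected_in :: "'a graph \<Rightarrow> 'a set \<Rightarrow> bool" where
  "connected_in G X \<longleftrightarrow>
     (\<forall>x\<in>X. \<forall>y\<in>X. (\<lambda>a b. a \<in> X \<and> b \<in> X \<and> {a, b} \<in> edges G)\<^sup>*\<^sup>* x y)"

definition rooted_minor :: "'b graph \<Rightarrow> 'b set \<Rightarrow> ('b \<Rightarrow> 'l) \<Rightarrow> 'a graph \<Rightarrow> 'a set \<Rightarrow> ('a \<Rightarrow> 'l) \<Rightarrow> bool" where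
  "rooted_minor H RH \<rho>H G RG \<rho>G \<longleftrightarrow> rooted RH \<rho>H H \<and>
     (\<exists>\<psi> :: 'b \<Rightarrow> 'a set.
        (\<forall>h\<in>verts H. \<psi> h \<noteq> {} \<and> \<psi> h \<subseteq> verts G \<and> connected_in G (\<psi> h)) \<and>
        (\<forall>h\<in>verts H. \<forall>h'\<in>verts H. h \<noteq> h' \<longrightarrow> \<psi> h \<inter> \<psi> h' = {}) \<and>
        (\<forall>e\<in>edges H. \<exists>h h'. e = {h, h'} \<and> (\<exists>x\<in>\<psi> h. \<exists>y\<in>\<psi> h'. {x, y} \<in> edges G)) \<and>
        (\<forall>u\<in>RH. \<exists>r\<in>RG. \<rho>G r = \<rho>H u \<and> r \<in> \<psi> u))"

definition detail_le :: "nat \<Rightarrow> 'b graph \<Rightarrow> 'b set \<Rightarrow> bool" where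
  "detail_le d H RH \<longleftrightarrow> card (edges H) \<le> d \<and> card (verts H - RH) \<le> d"

text \<open>The d-minor folio of B' relative to Q (Q labelled injectively by the identity, i.e.
  each vertex of Q is its own label) is generic: it contains every rooted graph of detail
  at most d whose root set is labelled (bijectively) by the labels of Q.  Rooted graphs are
  taken up to isomorphism, represented with vertices in nat.\<close>
definition generic_minor_folio :: "nat \<Rightarrow> 'a graph \<Rightarrow> 'a set \<Rightarrow> bool" where
  "generic_minor_folio d B' Q \<longleftrightarrow>
     (\<forall>(H :: nat graph) RH (\<rho>H :: nat \<Rightarrow> 'a).
        rooted RH \<rho>H H \<and> \<rho>H ` RH = Q \<and> detail_le d H RH \<longrightarrow>
        rooted_minor H RH \<rho>H B' Q id)"

end

theory Submission
  imports Defs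
begin

lemma is_path_alt:
  "is_path G P \<longleftrightarrow> P \<noteq> [] \<and> distinct P \<and> set P \<subseteq> verts G \<and>
     successively (\<lambda>a b. {a,b} \<in> edges G) P"
  by (simp add: is_path_def successively_conv_nth)

lemma rt_path:
  assumes "(\<lambda>a b. a \<in> X \<and> b \<in> X \<and> {a,b} \<in> E)\<^sup>*\<^sup>* x y" "x \<in> X"
  shows "\<exists>P. P \<noteq> [] \<and> hd P = x \<and> last P = y \<and> distinct P \<and> set P \<subseteq> X \<and>
           successively (\<lambda>a b. {a,b} \<in> E) P"
  using assms
proof (induction rule: rtranclp_induct)
  case base
  then show ?case by (intro exI[of _ "[x]"]) auto
next
  case (step y z)
  then obtain P where P: "P \<noteq> []" "hd P = x" "last P = y" "distinct P" "set P \<subseteq> X"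
    "successively (\<lambda>a b. {a,b} \<in> E) P" by blast
  show ?case
  proof (cases "z \<in> set P")
    case True
    then obtain xs ys where xs: "P = xs @ z # ys" by (meson split_list)
    have "successively (\<lambda>a b. {a,b} \<in> E) (xs @ [z])"
      using P(6) unfolding xs
      by (metis append.assoc append_Cons append_Nil successively_append_iff)
    moreover have "hd (xs @ [z]) = x" using P(2) xs by (cases xs) auto
    ultimately show ?thesis using P xs by (intro exI[of _ "xs @ [z]"]) auto
  next
    case False
    have "successively (\<lambda>a b. {a,b} \<in> E) (P @ [z])"
      using P step by (simp add: successively_append_iff)
    then show ?thesis using P False step by (intro exI[of _ "P @ [z]"]) auto
  qed
qed

lemma split3:
  assumes "x \<in> set P" "x \<notin> V"
  shows "\<exists>pre mid suf. P = pre @ mid @ suf \<and> set pre \<subseteq> V \<and> set suf \<subseteq> V \<and> mid \<noteq> [] \<and>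
           hd mid \<notin> V \<and> last mid \<notin> V"
proof -
  define pre where "pre = takeWhile (\<lambda>v. v \<in> V) P"
  define rest where "rest = dropWhile (\<lambda>v. v \<in> V) P"
  define suf where "suf = rev (takeWhile (\<lambda>v. v \<in> V) (rev rest))"
  define mid where "mid = rev (dropWhile (\<lambda>v. v \<in> V) (rev rest))"
  have P: "P = pre @ rest" by (simp add: pre_def rest_def)
  have rne: "rest \<noteq> []" using assms by (auto simp: rest_def dropWhile_eq_Nil_conv)
  have hr: "hd rest \<notin> V" using rne unfolding rest_def using hd_dropWhile by blast
  have r: "rest = mid @ suf" unfolding mid_def suf_def
    by (metis rev_append rev_rev_ident takeWhile_dropWhile_id)
  have mne: "mid \<noteq> []"
  proof
    assume "mid = []"
    then have "rest = suf" using r by simp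
    moreover have "set suf \<subseteq> V" unfolding suf_def by (auto dest: set_takeWhileD)
    ultimately have "set rest \<subseteq> V" by simp
    moreover have "hd rest \<in> set rest" using rne by simp
    ultimately show False using hr by (simp add: subset_iff)
  qed
  have "hd mid \<notin> V" using hr r mne by simp
  moreover have "last mid \<notin> V"
  proof -
    have "dropWhile (\<lambda>v. v \<in> V) (rev rest) \<noteq> []" using mne unfolding mid_def by simp
    then have "hd (dropWhile (\<lambda>v. v \<in> V) (rev rest)) \<notin> V" by (rule hd_dropWhile)
    then show ?thesis unfolding mid_def by (simp add: last_rev)
  qed
  moreover have "set pre \<subseteq> V" unfolding pre_def by (auto dest: set_takeWhileD)
  moreover have "set suf \<subseteq> V" unfolding suf_def by (auto dest: set_takeWhileD)
  ultimately show ?thesis using P r mne by blast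
qed

lemma join:
  assumes "successively R (xs @ [a])" "successively R (a # ys)"
  shows "successively R (xs @ a # ys)"
  using assms by (auto simp: successively_append_iff)

lemma hd_ne_last: "distinct xs \<Longrightarrow> 2 \<le> length xs \<Longrightarrow> hd xs \<noteq> last xs"
  by (cases xs) (auto simp: last_conv_nth)

lemma hd_mid_last: "xs \<noteq> [] \<Longrightarrow> hd xs \<noteq> last xs \<Longrightarrow> xs = hd xs # butlast (tl xs) @ [last xs]"
  by (cases xs) auto

theorem lemma4p8:
  fixes G A B :: "'a graph" and RG :: "'a set" and \<rho>G :: "'a \<Rightarrow> 'l"
    and H :: "'b graph" and RH :: "'b set" and \<rho>H :: "'b \<Rightarrow> 'l"
    and \<phi> :: "'b \<Rightarrow> 'a" and \<Phi> :: "'b set \<Rightarrow> 'a list"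
    and \<delta> :: nat and S :: "'a set"
  assumes "rooted RG \<rho>G G"
    and "separation G A B"
    and "in_folio \<delta> H RH \<rho>H G RG \<rho>G"
    and "tm_model H RH \<rho>H G RG \<rho>G \<phi> \<Phi>"
    and "RG \<union> closed_nbhd (realization H \<phi> \<Phi>) (\<phi> ` verts H) \<subseteq> verts A"
    and "S \<subseteq> verts B - verts A"
    and "generic_minor_folio (4 * \<delta>) (delete B S) (verts A \<inter> verts B)"
  shows "in_folio \<delta> H RH \<rho>H (delete G S) (RG - S) \<rho>G"
proof -
  define VA where "VA = verts A"
  define VB where "VB = verts B"
  define Q where "Q = VA \<inter> VB"
  have gG: "graph G" using assms(1) by (simp add: rooted_def)
  have sepA: "subgraph A G" and sepB: "subgraph B G" and VAB: "VA \<union> VB = verts G"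
    and EAB: "edges A \<union> edges B = edges G"
    using assms(2) by (auto simp: separation_def VA_def VB_def)
  have gA: "\<And>e. e \<in> edges A \<Longrightarrow> e \<subseteq> VA" using sepA by (simp add: subgraph_def graph_def VA_def)
  have gB: "\<And>e. e \<in> edges B \<Longrightarrow> e \<subseteq> VB" using sepB by (simp add: subgraph_def graph_def VB_def)
  have rH: "rooted RH \<rho>H H" and cardH: "card (edges H) + card (isolated H) \<le> \<delta>"
    using assms(3) by (auto simp: in_folio_def top_minor_def)
  have gH: "graph H" using rH by (simp add: rooted_def)
  have finEH: "finite (edges H)"
  proof -
    have "edges H \<subseteq> Pow (verts H)" using gH by (auto simp: graph_def)
    then show ?thesis using gH by (meson finite_Pow_iff graph_def rev_finite_subset)
  qed
  have cardEH: "card (edges H) \<le> \<delta>" using cardH by simp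
  have tm: "inj_on \<phi> (verts H)" "\<phi> ` verts H \<subseteq> verts G"
    "\<And>e. e\<in>edges H \<Longrightarrow> is_path G (\<Phi> e) \<and>
        (\<exists>u v. e = {u, v} \<and> hd (\<Phi> e) = \<phi> u \<and> last (\<Phi> e) = \<phi> v)"
    "\<And>e e'. e\<in>edges H \<Longrightarrow> e'\<in>edges H \<Longrightarrow> e \<noteq> e' \<Longrightarrow> internal (\<Phi> e) \<inter> internal (\<Phi> e') = {}"
    "\<And>e. e\<in>edges H \<Longrightarrow> internal (\<Phi> e) \<inter> \<phi> ` verts H = {}"
    "\<And>v. v\<in>RH \<Longrightarrow> \<phi> v \<in> RG \<and> \<rho>G (\<phi> v) = \<rho>H v"
  proof -
    note tmd = assms(4)[unfolded tm_model_def]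
    show "inj_on \<phi> (verts H)" using tmd by (rule conjunct1)
    show "\<phi> ` verts H \<subseteq> verts G" using tmd[THEN conjunct2] by (rule conjunct1)
    show "\<And>e. e\<in>edges H \<Longrightarrow> is_path G (\<Phi> e) \<and>
        (\<exists>u v. e = {u, v} \<and> hd (\<Phi> e) = \<phi> u \<and> last (\<Phi> e) = \<phi> v)"
      using tmd[THEN conjunct2, THEN conjunct2, THEN conjunct1] by (rule bspec)
    show "\<And>e e'. e\<in>edges H \<Longrightarrow> e'\<in>edges H \<Longrightarrow> e \<noteq> e' \<Longrightarrow> internal (\<Phi> e) \<inter> internal (\<Phi> e') = {}"
      using tmd[THEN conjunct2, THEN conjunct2, THEN conjunct2, THEN conjunct1] by simp
    show "\<And>e. e\<in>edges H \<Longrightarrow> internal (\<Phi> e) \<inter> \<phi> ` verts H = {}"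
      using tmd[THEN conjunct2, THEN conjunct2, THEN conjunct2, THEN conjunct2, THEN conjunct1] by (rule bspec)
    show "\<And>v. v\<in>RH \<Longrightarrow> \<phi> v \<in> RG \<and> \<rho>G (\<phi> v) = \<rho>H v"
      using tmd[THEN conjunct2, THEN conjunct2, THEN conjunct2, THEN conjunct2, THEN conjunct2] by (rule bspec)
  qed
  have RGA: "RG \<subseteq> VA" and ZA: "closed_nbhd (realization H \<phi> \<Phi>) (\<phi> ` verts H) \<subseteq> VA"
    using assms(5) by (auto simp: VA_def)
  have phiA: "\<phi> ` verts H \<subseteq> VA" using ZA by (auto simp: closed_nbhd_def)
  have SA: "S \<inter> VA = {}" using assms(6) by (auto simp: VA_def)
  have SVB: "S \<subseteq> VB" using assms(6) by (auto simp: VB_def)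
  have ends: "2 \<le> length (\<Phi> e) \<and> \<Phi> e ! 0 \<in> VA \<and> \<Phi> e ! 1 \<in> VA \<and>
      \<Phi> e ! (length (\<Phi> e) - 1) \<in> VA \<and> \<Phi> e ! (length (\<Phi> e) - 2) \<in> VA"
    if e: "e \<in> edges H" for e
  proof -
    obtain u v where uv: "e = {u, v}" "hd (\<Phi> e) = \<phi> u" "last (\<Phi> e) = \<phi> v"
      and pa: "is_path G (\<Phi> e)" using tm(3)[OF e] by blast
    let ?P = "\<Phi> e"
    have "card e = 2" "e \<subseteq> verts H" using gH e by (auto simp: graph_def)
    then have "u \<noteq> v" "u \<in> verts H" "v \<in> verts H" using uv by (auto simp: card_2_iff)
    then have uvne: "\<phi> u \<noteq> \<phi> v" using tm(1) by (simp add: inj_on_eq_iff)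
    have ne: "?P \<noteq> []" using pa by (simp add: is_path_def)
    have len: "2 \<le> length ?P"
    proof (rule ccontr)
      assume a: "\<not> 2 \<le> length ?P"
      then have "length ?P - 1 = 0" by simp
      then have "hd ?P = last ?P" using ne by (simp add: hd_conv_nth last_conv_nth)
      then show False using uvne uv by simp
    qed
    have h0: "?P ! 0 = \<phi> u" using uv ne by (simp add: hd_conv_nth)
    have hl: "?P ! (length ?P - 1) = \<phi> v" using uv ne by (simp add: last_conv_nth)
    define R where "R = realization H \<phi> \<Phi>"
    have inR: "\<And>i. i < length ?P \<Longrightarrow> ?P ! i \<in> verts R"
    proof -
      fix i assume "i < length ?P"
      then have "?P ! i \<in> set ?P" by simp
      then show "?P ! i \<in> verts R" using e unfolding R_def realization_def by auto
    qed
    have peR: "\<And>i. Suc i < length ?P \<Longrightarrow> {?P ! i, ?P ! Suc i} \<in> edges R"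
    proof -
      fix i assume "Suc i < length ?P"
      then have "{?P ! i, ?P ! Suc i} \<in> path_edges ?P" unfolding path_edges_def by blast
      then show "{?P ! i, ?P ! Suc i} \<in> edges R" using e unfolding R_def realization_def by auto
    qed
    have cn: "\<And>x w. x \<in> verts H \<Longrightarrow> w \<in> verts R \<Longrightarrow> {\<phi> x, w} \<in> edges R \<Longrightarrow>
        w \<in> closed_nbhd R (\<phi> ` verts H)"
      unfolding closed_nbhd_def by blast
    have "{\<phi> u, ?P ! 1} \<in> edges R" using peR[of 0] len h0 by simp
    then have 1: "?P ! 1 \<in> VA" using cn[OF \<open>u \<in> verts H\<close> inR[of 1]] len ZA R_def by auto
    have "Suc (length ?P - 2) = length ?P - 1" using len by simp
    then have "{?P ! (length ?P - 2), \<phi> v} \<in> edges R"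
      using peR[of "length ?P - 2"] len hl by simp
    then have "{\<phi> v, ?P ! (length ?P - 2)} \<in> edges R"
      by (simp add: insert_commute)
    then have 2: "?P ! (length ?P - 2) \<in> VA"
      using cn[OF \<open>v \<in> verts H\<close> inR[of "length ?P - 2"]] len ZA R_def by auto
    have "\<phi> u \<in> VA" "\<phi> v \<in> VA" using phiA \<open>u \<in> verts H\<close> \<open>v \<in> verts H\<close> by auto
    then show ?thesis using 1 2 h0 hl len by simp
  qed
  define CE where "CE = {e \<in> edges H. \<exists>x\<in>set (\<Phi> e). x \<notin> VA}"
  have CEH: "CE \<subseteq> edges H" by (auto simp: CE_def)
  have "\<forall>e\<in>CE. \<exists>t. \<Phi> e = fst t @ fst (snd t) @ snd (snd t) \<and> set (fst t) \<subseteq> VA \<and>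
        set (snd (snd t)) \<subseteq> VA \<and> fst (snd t) \<noteq> [] \<and> hd (fst (snd t)) \<notin> VA \<and>
        last (fst (snd t)) \<notin> VA \<and> 2 \<le> length (fst t) \<and> 2 \<le> length (snd (snd t))"
  proof
    fix e assume eC: "e \<in> CE"
    then have e: "e \<in> edges H" and "\<exists>x\<in>set (\<Phi> e). x \<notin> VA" by (auto simp: CE_def)
    then obtain x where x: "x \<in> set (\<Phi> e)" "x \<notin> VA" by blast
    obtain pre mid suf where d: "\<Phi> e = pre @ mid @ suf" "set pre \<subseteq> VA" "set suf \<subseteq> VA"
      "mid \<noteq> []" "hd mid \<notin> VA" "last mid \<notin> VA" using split3[OF x] by blast
    note E = ends[OF e]
    have "2 \<le> length pre"
    proof (rule ccontr)
      assume "\<not> 2 \<le> length pre"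
      then have "length pre = 0 \<or> length pre = 1" by linarith
      moreover have "\<Phi> e ! length pre = hd mid" using d by (simp add: nth_append hd_conv_nth)
      ultimately show False using E d(5) by auto
    qed
    moreover have "2 \<le> length suf"
    proof (rule ccontr)
      assume "\<not> 2 \<le> length suf"
      then have "length suf = 0 \<or> length suf = 1" by linarith
      moreover have lm: "\<Phi> e ! (length pre + (length mid - 1)) = last mid" using d
        by (simp only: nth_append_length_plus) (simp add: nth_append last_conv_nth)
      moreover have "length (\<Phi> e) = length pre + length mid + length suf" using d by simp
      moreover have "length mid \<ge> 1" using d(4) by (cases mid) auto
      ultimately have "length pre + (length mid - 1) = length (\<Phi> e) - 1 \<or>
          length pre + (length mid - 1) = length (\<Phi> e) - 2" by linarith
      then show False using E d(6) lm by auto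
    qed
    ultimately show "\<exists>t. \<Phi> e = fst t @ fst (snd t) @ snd (snd t) \<and> set (fst t) \<subseteq> VA \<and>
        set (snd (snd t)) \<subseteq> VA \<and> fst (snd t) \<noteq> [] \<and> hd (fst (snd t)) \<notin> VA \<and>
        last (fst (snd t)) \<notin> VA \<and> 2 \<le> length (fst t) \<and> 2 \<le> length (snd (snd t))"
      using d by (intro exI[of _ "(pre, mid, suf)"]) simp
  qed
  from bchoice[OF this] obtain T where T: "\<forall>e \<in> CE. \<Phi> e = fst (T e) @ fst (snd (T e)) @ snd (snd (T e)) \<and> set (fst (T e)) \<subseteq> VA \<and>
        set (snd (snd (T e))) \<subseteq> VA \<and> fst (snd (T e)) \<noteq> [] \<and> hd (fst (snd (T e))) \<notin> VA \<and>
        last (fst (snd (T e))) \<notin> VA \<and> 2 \<le> length (fst (T e)) \<and> 2 \<le> length (snd (snd (T e)))"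
    by blast
  define pre where "pre e = fst (T e)" for e
  define mid where "mid e = fst (snd (T e))" for e
  define suf where "suf e = snd (snd (T e))" for e
  have D: "\<Phi> e = pre e @ mid e @ suf e" "set (pre e) \<subseteq> VA" "set (suf e) \<subseteq> VA" "mid e \<noteq> []"
    "hd (mid e) \<notin> VA" "last (mid e) \<notin> VA" "2 \<le> length (pre e)" "2 \<le> length (suf e)"
    if "e \<in> CE" for e using bspec[OF T that] unfolding pre_def mid_def suf_def by auto
  define q1 where "q1 e = last (pre e)" for e
  define q2 where "q2 e = hd (suf e)" for e
  have Q: "q1 e \<in> Q \<and> q2 e \<in> Q \<and> q1 e \<in> internal (\<Phi> e) \<and> q2 e \<in> internal (\<Phi> e) \<and> q1 e \<noteq> q2 e
       \<and> q1 e \<in> set (pre e) \<and> q2 e \<in> set (suf e)"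
    if eC: "e \<in> CE" for e
  proof -
    have e: "e \<in> edges H" using eC CEH by auto
    have pa: "is_path G (\<Phi> e)" using tm(3)[OF e] by blast
    then have succ: "successively (\<lambda>a b. {a,b} \<in> edges G) (\<Phi> e)" and dist: "distinct (\<Phi> e)"
      by (auto simp: is_path_alt)
    note d = D[OF eC]
    have pne: "pre e \<noteq> []" "suf e \<noteq> []" using d by auto
    have e1: "{q1 e, hd (mid e)} \<in> edges G" using succ d pne unfolding q1_def
      by (simp add: successively_append_iff)
    have e2: "{last (mid e), q2 e} \<in> edges G" using succ d pne unfolding q2_def
      by (simp add: successively_append_iff)
    have "{q1 e, hd (mid e)} \<notin> edges A"
    proof
      assume "{q1 e, hd (mid e)} \<in> edges A"
      then have "{q1 e, hd (mid e)} \<subseteq> VA" by (rule gA)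
      then show False using d(5) by simp
    qed
    then have "q1 e \<in> VB" using e1 EAB gB by blast
    moreover have "{last (mid e), q2 e} \<notin> edges A"
    proof
      assume "{last (mid e), q2 e} \<in> edges A"
      then have "{last (mid e), q2 e} \<subseteq> VA" by (rule gA)
      then show False using d(6) by simp
    qed
    then have "q2 e \<in> VB" using e2 EAB gB by blast
    moreover have "q1 e \<in> set (pre e)" "q2 e \<in> set (suf e)" using pne by (auto simp: q1_def q2_def)
    moreover have "q1 e \<in> VA" "q2 e \<in> VA" using d(2,3) calculation(3,4) by auto
    moreover have dj: "set (pre e) \<inter> set (suf e) = {}" "distinct (pre e)" using dist d(1)
      unfolding d(1) by auto
    moreover have "hd (\<Phi> e) = hd (pre e)" "last (\<Phi> e) = last (suf e)" using d(1) pne by auto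
    moreover have "hd (pre e) \<noteq> q1 e" using hd_ne_last[OF dj(2) d(7)] by (simp add: q1_def)
    moreover have "last (suf e) \<in> set (suf e)" using pne by simp
    moreover have "hd (pre e) \<in> set (pre e)" using pne by simp
    moreover have "distinct (suf e)" using dist unfolding d(1) by auto
    then have "q2 e \<noteq> last (suf e)" using hd_ne_last[OF _ d(8)] by (simp add: q2_def)
    ultimately show ?thesis using d(1) unfolding internal_def Q_def by auto
  qed

  have finQ: "finite Q"
  proof -
    have "Q \<subseteq> verts G" using VAB unfolding Q_def by blast
    then show ?thesis using gG by (meson graph_def rev_finite_subset)
  qed
  define NN where "NN = {0..<card Q}"
  obtain hh where hh: "bij_betw hh NN Q" using ex_bij_betw_nat_finite[OF finQ] NN_def by blast
  define idx where "idx = the_inv_into NN hh"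
  have idxQ: "idx q \<in> NN \<and> hh (idx q) = q" if "q \<in> Q" for q
    unfolding idx_def
  proof (intro conjI)
    show "the_inv_into NN hh q \<in> NN"
      using that hh by (intro the_inv_into_into) (auto simp: bij_betw_def)
    show "hh (the_inv_into NN hh q) = q" using that hh by (intro f_the_inv_into_f_bij_betw)
  qed
  have idx_inj: "q = q'" if "q \<in> Q" "q' \<in> Q" "idx q = idx q'" for q q'
    using idxQ[OF that(1)] idxQ[OF that(2)] that(3) by metis
  define H' :: "nat graph" where "H' = \<lparr>verts = NN, edges = (\<lambda>e. {idx (q1 e), idx (q2 e)}) ` CE\<rparr>"
  have vH': "verts H' = NN" "edges H' = (\<lambda>e. {idx (q1 e), idx (q2 e)}) ` CE" by (simp_all add: H'_def)
  have i12: "idx (q1 e) \<in> NN \<and> idx (q2 e) \<in> NN \<and> idx (q1 e) \<noteq> idx (q2 e) \<and>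
      hh (idx (q1 e)) = q1 e \<and> hh (idx (q2 e)) = q2 e" if "e \<in> CE" for e
    using Q[OF that] idxQ idx_inj by metis
  have rH': "rooted NN hh H'"
    unfolding rooted_def graph_def vH'
  proof (intro conjI ballI)
    show "finite NN" by (simp add: NN_def)
    show "inj_on hh NN" using hh by (rule bij_betw_imp_inj_on)
    fix E assume "E \<in> (\<lambda>e. {idx (q1 e), idx (q2 e)}) ` CE"
    then obtain e where "e \<in> CE" "E = {idx (q1 e), idx (q2 e)}" by blast
    then show "E \<subseteq> NN" "card E = 2" using i12 by auto
  qed simp
  have imgQ: "hh ` NN = Q" using hh by (rule bij_betw_imp_surj_on)
  have "card (edges H') \<le> card CE" unfolding vH' using finEH CEH
    by (meson card_image_le rev_finite_subset)
  also have "\<dots> \<le> card (edges H)" using finEH CEH by (rule card_mono)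
  finally have det: "detail_le (4 * \<delta>) H' NN" using cardEH unfolding detail_le_def vH' by simp
  have gm: "\<forall>(H :: nat graph) RH (\<rho>H :: nat \<Rightarrow> 'a).
        rooted RH \<rho>H H \<and> \<rho>H ` RH = Q \<and> detail_le (4 * \<delta>) H RH \<longrightarrow>
        rooted_minor H RH \<rho>H (delete B S) Q id"
    using assms(7) unfolding generic_minor_folio_def Q_def VA_def VB_def .
  have "rooted_minor H' NN hh (delete B S) Q id"
    using spec[OF spec[OF spec[OF gm, of H'], of NN], of hh] rH' imgQ det by blast
  then have "\<exists>\<psi> :: nat \<Rightarrow> 'a set.
        (\<forall>h\<in>NN. \<psi> h \<noteq> {} \<and> \<psi> h \<subseteq> verts (delete B S) \<and> connected_in (delete B S) (\<psi> h)) \<and>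
        (\<forall>h\<in>NN. \<forall>h'\<in>NN. h \<noteq> h' \<longrightarrow> \<psi> h \<inter> \<psi> h' = {}) \<and>
        (\<forall>E\<in>edges H'. \<exists>h h'. E = {h, h'} \<and> (\<exists>x\<in>\<psi> h. \<exists>y\<in>\<psi> h'. {x, y} \<in> edges (delete B S))) \<and>
        (\<forall>u\<in>NN. \<exists>r\<in>Q. id r = hh u \<and> r \<in> \<psi> u)"
    unfolding rooted_minor_def vH'(1) by (rule conjunct2)
  then obtain \<psi> :: "nat \<Rightarrow> 'a set" where
    psi1: "\<forall>h\<in>NN. \<psi> h \<noteq> {} \<and> \<psi> h \<subseteq> verts (delete B S) \<and> connected_in (delete B S) (\<psi> h)"
    and psi2: "\<forall>h\<in>NN. \<forall>h'\<in>NN. h \<noteq> h' \<longrightarrow> \<psi> h \<inter> \<psi> h' = {}"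
    and psi3: "\<forall>E\<in>edges H'. \<exists>h h'. E = {h, h'} \<and> (\<exists>x\<in>\<psi> h. \<exists>y\<in>\<psi> h'. {x, y} \<in> edges (delete B S))"
    and psi4: "\<forall>u\<in>NN. \<exists>r\<in>Q. id r = hh u \<and> r \<in> \<psi> u"
    by (elim exE conjE)
  have root: "hh u \<in> \<psi> u" if "u \<in> NN" for u using psi4 that by auto
  have EBG: "edges (delete B S) \<subseteq> edges (delete G S)"
    using sepB unfolding subgraph_def delete_def by auto
  have vBS: "verts (delete B S) = VB - S" by (simp add: delete_def VB_def)
  have "\<forall>e\<in>CE. \<exists>M. successively (\<lambda>a b. {a,b} \<in> edges (delete G S)) (q1 e # M @ [q2 e]) \<and>
      distinct (q1 e # M @ [q2 e]) \<and> set M \<subseteq> \<psi> (idx (q1 e)) \<union> \<psi> (idx (q2 e)) \<and>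
      set M \<inter> VA = {} \<and> set M \<subseteq> verts G - S"
  proof
    fix e assume eC: "e \<in> CE"
    define i1 where "i1 = idx (q1 e)"
    define i2 where "i2 = idx (q2 e)"
    have ii: "i1 \<in> NN" "i2 \<in> NN" "i1 \<noteq> i2" "hh i1 = q1 e" "hh i2 = q2 e"
      using i12[OF eC] unfolding i1_def i2_def by auto
    have dis: "\<psi> i1 \<inter> \<psi> i2 = {}" using bspec[OF bspec[OF psi2 ii(1)] ii(2)] ii(3) by simp
    have "{i1, i2} \<in> edges H'"
      using imageI[OF eC, of "\<lambda>e. {idx (q1 e), idx (q2 e)}"] unfolding vH' i1_def i2_def by simp
    from bspec[OF psi3 this] obtain h h' where hh': "{i1, i2} = {h, h'}"
      "\<exists>x\<in>\<psi> h. \<exists>y\<in>\<psi> h'. {x, y} \<in> edges (delete B S)" by blast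
    from hh'(2) obtain x y where hx0: "x \<in> \<psi> h" "y \<in> \<psi> h'"
      "{x, y} \<in> edges (delete B S)" by blast
    note hx = hh'(1) hx0
    have "\<exists>x\<in>\<psi> i1. \<exists>y\<in>\<psi> i2. {x, y} \<in> edges (delete B S)"
    proof (cases "h = i1")
      case True
      then have "h' = i2" using hx(1) ii(3) by (auto simp: doubleton_eq_iff)
      then show ?thesis using hx True by blast
    next
      case False
      then have "h = i2" "h' = i1" using hx(1) by (auto simp: doubleton_eq_iff)
      then show ?thesis using hx by (metis insert_commute)
    qed
    then obtain x y where xy: "x \<in> \<psi> i1" "y \<in> \<psi> i2" "{x, y} \<in> edges (delete B S)" by blast
    have c1: "connected_in (delete B S) (\<psi> i1)" "connected_in (delete B S) (\<psi> i2)"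
      using psi1 ii by auto
    have r1: "q1 e \<in> \<psi> i1" "q2 e \<in> \<psi> i2" using root[OF ii(1)] root[OF ii(2)] ii(4,5) by simp_all
    obtain P1 where P1: "P1 \<noteq> []" "hd P1 = q1 e" "last P1 = x" "distinct P1" "set P1 \<subseteq> \<psi> i1"
      "successively (\<lambda>a b. {a,b} \<in> edges (delete B S)) P1"
      using rt_path[OF c1(1)[unfolded connected_in_def, rule_format, OF r1(1) xy(1)] r1(1)] by blast
    obtain P2 where P2: "P2 \<noteq> []" "hd P2 = y" "last P2 = q2 e" "distinct P2" "set P2 \<subseteq> \<psi> i2"
      "successively (\<lambda>a b. {a,b} \<in> edges (delete B S)) P2"
      using rt_path[OF c1(2)[unfolded connected_in_def, rule_format, OF xy(2) r1(2)] xy(2)] by blast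
    define N0 where "N0 = P1 @ P2"
    have N0: "N0 \<noteq> []" "hd N0 = q1 e" "last N0 = q2 e" "distinct N0" "set N0 \<subseteq> \<psi> i1 \<union> \<psi> i2"
      "successively (\<lambda>a b. {a,b} \<in> edges (delete B S)) N0"
      using P1 P2 dis xy unfolding N0_def by (auto simp: successively_append_iff)
    define M where "M = butlast (tl N0)"
    have qne: "q1 e \<noteq> q2 e" using Q[OF eC] by blast
    have NM: "N0 = q1 e # M @ [q2 e]" using hd_mid_last[OF N0(1)] N0(2,3) qne unfolding M_def by simp
    have sM: "set M \<subseteq> \<psi> i1 \<union> \<psi> i2" using N0(5) NM by auto
    have MVA: "set M \<inter> VA = {}"
    proof (rule ccontr)
      assume "set M \<inter> VA \<noteq> {}"
      then obtain m where m: "m \<in> set M" "m \<in> VA" by blast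
      have mq: "m \<noteq> q1 e" "m \<noteq> q2 e" using N0(4) m(1) unfolding NM by auto
      have "m \<in> verts (delete B S)"
        using m(1) sM bspec[OF psi1 ii(1)] bspec[OF psi1 ii(2)] by blast
      then have "m \<in> Q" using m(2) vBS unfolding Q_def by blast
      then have k: "idx m \<in> NN" "hh (idx m) = m" using idxQ by auto
      then have mk: "m \<in> \<psi> (idx m)" using root by metis
      show False
      proof (cases "m \<in> \<psi> i1")
        case True
        have "idx m = i1"
        proof (rule ccontr)
          assume "idx m \<noteq> i1"
          then have "\<psi> (idx m) \<inter> \<psi> i1 = {}" using bspec[OF bspec[OF psi2 k(1)] ii(1)] by simp
          then show False using True mk by blast
        qed
        then show False using k(2) ii(4) mq by simp
      next
        case False
        then have "m \<in> \<psi> i2" using m(1) sM by blast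
        have "idx m = i2"
        proof (rule ccontr)
          assume "idx m \<noteq> i2"
          then have "\<psi> (idx m) \<inter> \<psi> i2 = {}" using bspec[OF bspec[OF psi2 k(1)] ii(2)] by simp
          then show False using \<open>m \<in> \<psi> i2\<close> mk by blast
        qed
        then show False using k(2) ii(5) mq by simp
      qed
    qed
    have "set M \<subseteq> VB - S" using sM bspec[OF psi1 ii(1)] bspec[OF psi1 ii(2)] vBS by blast
    then have MG: "set M \<subseteq> verts G - S" using VAB by blast
    have "successively (\<lambda>a b. {a,b} \<in> edges (delete G S)) N0"
      using N0(6) by (rule successively_mono) (use EBG in blast)
    then show "\<exists>M. successively (\<lambda>a b. {a,b} \<in> edges (delete G S)) (q1 e # M @ [q2 e]) \<and>
      distinct (q1 e # M @ [q2 e]) \<and> set M \<subseteq> \<psi> (idx (q1 e)) \<union> \<psi> (idx (q2 e)) \<and>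
      set M \<inter> VA = {} \<and> set M \<subseteq> verts G - S"
      using NM N0(4) sM MVA MG unfolding i1_def i2_def by (intro exI[of _ M]) simp
  qed
  from bchoice[OF this] obtain MM where MM: "\<forall>e\<in>CE. successively (\<lambda>a b. {a,b} \<in> edges (delete G S)) (q1 e # MM e @ [q2 e]) \<and>
      distinct (q1 e # MM e @ [q2 e]) \<and> set (MM e) \<subseteq> \<psi> (idx (q1 e)) \<union> \<psi> (idx (q2 e)) \<and>
      set (MM e) \<inter> VA = {} \<and> set (MM e) \<subseteq> verts G - S" by blast

  define \<Phi>' where "\<Phi>' e = (if e \<in> CE then pre e @ MM e @ suf e else \<Phi> e)" for e
  define Ms where "Ms e = (if e \<in> CE then set (MM e) else {})" for e
  have VAG: "VA \<subseteq> verts G" using VAB by blast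
  have liftA: "successively (\<lambda>a b. {a,b} \<in> edges (delete G S)) xs"
    if "successively (\<lambda>a b. {a,b} \<in> edges G) xs" "set xs \<subseteq> VA" for xs
    using that(1)
  proof (rule successively_mono)
    fix a b assume "a \<in> set xs" "b \<in> set xs" "{a, b} \<in> edges G"
    then show "{a, b} \<in> edges (delete G S)" using that(2) SA unfolding delete_def by auto
  qed
  have vGS: "verts (delete G S) = verts G - S" by (simp add: delete_def)
  have new: "is_path (delete G S) (\<Phi>' e) \<and> hd (\<Phi>' e) = hd (\<Phi> e) \<and> last (\<Phi>' e) = last (\<Phi> e) \<and>
      set (\<Phi>' e) \<subseteq> (set (\<Phi> e) \<inter> VA) \<union> Ms e"
    if e: "e \<in> edges H" for e
  proof -
    have pa: "is_path G (\<Phi> e)" using tm(3)[OF e] by blast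
    then have succ: "successively (\<lambda>a b. {a,b} \<in> edges G) (\<Phi> e)" and dist: "distinct (\<Phi> e)"
      and ne: "\<Phi> e \<noteq> []" and sG: "set (\<Phi> e) \<subseteq> verts G"
      by (auto simp: is_path_alt)
    show ?thesis
    proof (cases "e \<in> CE")
      case False
      then have sA: "set (\<Phi> e) \<subseteq> VA" using e unfolding CE_def by blast
      have "is_path (delete G S) (\<Phi> e)" unfolding is_path_alt vGS
        using ne dist sG sA SA liftA[OF succ sA] by auto
      then show ?thesis using False sA unfolding \<Phi>'_def Ms_def by auto
    next
      case True
      note d = D[OF True]
      note q = Q[OF True]
      note m = bspec[OF MM True]
      have pne: "pre e \<noteq> []" "suf e \<noteq> []" using d by auto
      have sp: "successively (\<lambda>a b. {a,b} \<in> edges G) (pre e)"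
        "successively (\<lambda>a b. {a,b} \<in> edges G) (suf e)"
        using succ unfolding d(1) by (auto simp: successively_append_iff)
      have sp': "successively (\<lambda>a b. {a,b} \<in> edges (delete G S)) (pre e)"
        "successively (\<lambda>a b. {a,b} \<in> edges (delete G S)) (suf e)"
        using liftA[OF sp(1) d(2)] liftA[OF sp(2) d(3)] by auto
      obtain pre' where pdec: "pre e = pre' @ [q1 e]" using pne(1) unfolding q1_def
        by (metis append_butlast_last_id)
      obtain suf' where sdec: "suf e = q2 e # suf'" using pne(2) unfolding q2_def
        by (metis list.collapse)
      have w1: "successively (\<lambda>a b. {a,b} \<in> edges (delete G S)) (q1 e # MM e @ q2 e # suf')"
        using join[of _ "q1 e # MM e" "q2 e" "suf'"] m sp'(2) unfolding sdec by simp
      have "successively (\<lambda>a b. {a,b} \<in> edges (delete G S)) (pre' @ q1 e # (MM e @ q2 e # suf'))"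
        using join[OF _ w1] sp'(1) unfolding pdec by simp
      then have w: "successively (\<lambda>a b. {a,b} \<in> edges (delete G S)) (\<Phi>' e)"
        unfolding \<Phi>'_def using True unfolding pdec sdec by simp
      have dp: "distinct (pre e)" "distinct (suf e)" "set (pre e) \<inter> set (suf e) = {}"
        using dist unfolding d(1) by auto
      have dm: "distinct (MM e)" using m by simp
      have "distinct (\<Phi>' e)" unfolding \<Phi>'_def using True dp dm m d(2,3) by auto
      moreover have "set (\<Phi>' e) \<subseteq> verts G - S" unfolding \<Phi>'_def using True m d(2,3) VAG SA by auto
      moreover have "\<Phi>' e \<noteq> []" unfolding \<Phi>'_def using True pne by simp
      ultimately have "is_path (delete G S) (\<Phi>' e)" unfolding is_path_alt vGS using w by blast
      moreover have "hd (\<Phi>' e) = hd (\<Phi> e)" "last (\<Phi>' e) = last (\<Phi> e)"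
        unfolding \<Phi>'_def using True pne d(1) by auto
      moreover have "set (\<Phi>' e) \<subseteq> (set (\<Phi> e) \<inter> VA) \<union> Ms e"
        unfolding \<Phi>'_def Ms_def using True d by auto
      ultimately show ?thesis by blast
    qed
  qed
  have intl: "internal (\<Phi>' e) \<subseteq> (internal (\<Phi> e) \<inter> VA) \<union> Ms e" if e: "e \<in> edges H" for e
    using new[OF e] unfolding internal_def by auto
  have MsVA: "Ms e \<inter> VA = {}" for e unfolding Ms_def using MM by auto
  have Mspsi: "Ms e \<subseteq> \<psi> (idx (q1 e)) \<union> \<psi> (idx (q2 e))" for e unfolding Ms_def using MM by auto
  have tm': "tm_model H RH \<rho>H (delete G S) (RG - S) \<rho>G \<phi> \<Phi>'"
    unfolding tm_model_def
  proof (intro conjI ballI impI)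
    show "inj_on \<phi> (verts H)" by (rule tm(1))
    show "\<phi> ` verts H \<subseteq> verts (delete G S)" using phiA VAG SA vGS by auto
  next
    fix e assume e: "e \<in> edges H"
    show "is_path (delete G S) (\<Phi>' e)" using new[OF e] by blast
    obtain u v where "e = {u, v}" "hd (\<Phi> e) = \<phi> u" "last (\<Phi> e) = \<phi> v" using tm(3)[OF e] by blast
    then show "\<exists>u v. e = {u, v} \<and> hd (\<Phi>' e) = \<phi> u \<and> last (\<Phi>' e) = \<phi> v" using new[OF e] by metis
  next
    fix e e' assume e: "e \<in> edges H" and e': "e' \<in> edges H" and ne: "e \<noteq> e'"
    show "internal (\<Phi>' e) \<inter> internal (\<Phi>' e') = {}"
    proof (rule ccontr)
      assume "internal (\<Phi>' e) \<inter> internal (\<Phi>' e') \<noteq> {}"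
      then obtain x where x: "x \<in> internal (\<Phi>' e)" "x \<in> internal (\<Phi>' e')" by blast
      have d0: "internal (\<Phi> e) \<inter> internal (\<Phi> e') = {}" using tm(4)[OF e e' ne] .
      show False
      proof (cases "x \<in> VA")
        case True
        then have "x \<in> internal (\<Phi> e)" "x \<in> internal (\<Phi> e')"
          using intl[OF e] intl[OF e'] x MsVA by blast+
        then show False using d0 by blast
      next
        case False
        then have xm: "x \<in> Ms e" "x \<in> Ms e'" using intl[OF e] intl[OF e'] x by blast+
        then have eC: "e \<in> CE" "e' \<in> CE" unfolding Ms_def by (auto split: if_splits)
        obtain qa where qa: "qa \<in> {q1 e, q2 e}" "x \<in> \<psi> (idx qa)" using xm(1) Mspsi by blast
        obtain qb where qb: "qb \<in> {q1 e', q2 e'}" "x \<in> \<psi> (idx qb)" using xm(2) Mspsi by blast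
        have qai: "qa \<in> internal (\<Phi> e)" "qa \<in> Q" using qa(1) Q[OF eC(1)] by auto
        have qbi: "qb \<in> internal (\<Phi> e')" "qb \<in> Q" using qb(1) Q[OF eC(2)] by auto
        have "qa \<noteq> qb" using qai qbi d0 by blast
        then have "idx qa \<noteq> idx qb" using idx_inj qai(2) qbi(2) by blast
        then have "\<psi> (idx qa) \<inter> \<psi> (idx qb) = {}"
          using bspec[OF bspec[OF psi2 conjunct1[OF idxQ[OF qai(2)]]] conjunct1[OF idxQ[OF qbi(2)]]] by simp
        then show False using qa(2) qb(2) by blast
      qed
    qed
  next
    fix e assume e: "e \<in> edges H"
    show "internal (\<Phi>' e) \<inter> \<phi> ` verts H = {}"
      using intl[OF e] tm(5)[OF e] MsVA phiA by blast
  next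
    fix v assume v: "v \<in> RH"
    show "\<phi> v \<in> RG - S" using tm(6)[OF v] RGA SA by blast
    show "\<rho>G (\<phi> v) = \<rho>H v" using tm(6)[OF v] by blast
  qed
  show ?thesis unfolding in_folio_def top_minor_def using rH tm' cardH by blast
qed

end
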